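(* Let $\mathbb{X},\mathbb{Y}$ be finite-dimensional real Hilbert spaces, $f:\mathbb{X}\to(-\infty,\infty]$ and $g:\mathbb{Y}\to(-\infty,\infty]$ proper, convex and lower semicontinuous, $K:\mathbb{X}\to\mathbb{Y}$ linear, and $h:\mathbb{X}\to\mathbb{R}$ convex, differentiable and locally smooth. Let $(x_n)$, $(\tau_n)$, $(\theta_n)$ be generated by the aEGRPDA algorithm described in the context, and suppose $(x_n)$ is bounded. Then the sequences $(\tau_n)$ and $(\theta_n)$ are bounded below by positive constants.
   Context: $\phi=\frac{1+\sqrt5}{2}$; $K^*$ adjoint of $K$; $\|K\|$ operator norm; $\operatorname{prox}_{\lambda f}(x)=\arg\min_{u}\{f(u)+\frac{1}{2\lambda}\|u-x\|^2\}$. Locally smooth: for every compact $D\subset\mathbb{X}$ there is $L_D>0$ with $\|\nabla h(x)-\nabla h(y)\|\le L_D\|x-y\|$ for all $x,y\in D$. aEGRPDA: choose $x_0\in\mathbb{X}$, $y_0\in\mathbb{Y}$, set $z_0=x_0$; choose $\beta>0$, $\psi\in(1,\phi]$, $\rho=\psi^{-1}+\psi^{-2}$, $\theta_0>0$, $\tau_{\max}>0$, $\tau_0>0$. For $n=1,2,\dots$: $z_n=\frac{\psi-1}{\psi}x_{n-1}+\frac1\psi z_{n-1}$; $x_n=\operatorname{prox}_{\tau_{n-1}f}\big(z_n-\tau_{n-1}K^*y_{n-1}-\tau_{n-1}\nabla h(x_{n-1})\big)$; $\tau_n=\min\left\{\rho\tau_{n-1},\ \frac{\psi\theta_{n-1}}{9(\bar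 L_n^2+\beta\psi\|K\|^2)}\frac{1}{\tau_{n-1}},\ \tau_{\max}\right\}$ where $\bar L_n=\frac{\|\nabla h(x_n)-\nabla h(x_{n-1})\|}{\|x_n-x_{n-1}\|}$ (if $x_n=x_{n-1}$, then $\tau_n=\min\{\rho\tau_{n-1},\tau_{\max}\}$; a zero denominator is read as $+\infty$); $\sigma_n=\beta\tau_n$; $w_n=\operatorname{prox}_{\frac1{\sigma_n}g}\big(\frac{y_{n-1}}{\sigma_n}+Kx_n\big)$; $y_n=y_{n-1}+\sigma_n(Kx_n-w_n)$; $\theta_n=\frac{\psi\tau_n}{\tau_{n-1}}$. *)

theory Defs
  imports "HOL-Analysis.Analysis"
begin

definition proper_fun :: "('a \<Rightarrow> ereal) \<Rightarrow> bool" where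
  "proper_fun f \<longleftrightarrow> (\<forall>x. f x \<noteq> -\<infinity>) \<and> (\<exists>x. f x \<noteq> \<infinity>)"

definition convex_fun :: "('a::real_vector \<Rightarrow> ereal) \<Rightarrow> bool" where
  "convex_fun f \<longleftrightarrow> (\<forall>x y t. 0 < t \<and> t < 1 \<longrightarrow>
      f ((1 - t) *\<^sub>R x + t *\<^sub>R y) \<le> ereal (1 - t) * f x + ereal t * f y)"

definition lsc_fun :: "('a::topological_space \<Rightarrow> ereal) \<Rightarrow> bool" where
  "lsc_fun f \<longleftrightarrow> (\<forall>x c. c < f x \<longrightarrow> (\<forall>\<^sub>F y in at x. c < f y))"

definition is_prox :: "real \<Rightarrow> ('a::real_normed_vector \<Rightarrow> ereal) \<Rightarrow> 'a \<Rightarrow> 'a \<Rightarrow> bool" where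
  "is_prox lam f x u \<longleftrightarrow> (\<forall>v. f u + ereal ((norm (u - x))\<^sup>2 / (2 * lam))
                                  \<le> f v + ereal ((norm (v - x))\<^sup>2 / (2 * lam)))"

definition locally_smooth :: "('a::real_normed_vector \<Rightarrow> 'a) \<Rightarrow> bool" where
  "locally_smooth G \<longleftrightarrow> (\<forall>D. compact D \<longrightarrow>
      (\<exists>L>0. \<forall>x\<in>D. \<forall>y\<in>D. norm (G x - G y) \<le> L * norm (x - y)))"

definition golden_ratio :: real where
  "golden_ratio = (1 + sqrt 5) / 2"

end

theory Submission
  imports Defs
begin

theorem proposition5p1:
  fixes f :: "'a::euclidean_space \<Rightarrow> ereal"
    and g :: "'b::euclidean_space \<Rightarrow> ereal"
    and K :: "'a \<Rightarrow> 'b"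
    and h :: "'a \<Rightarrow> real"
    and gradh :: "'a \<Rightarrow> 'a"
    and x z :: "nat \<Rightarrow> 'a"
    and y w :: "nat \<Rightarrow> 'b"
    and tau sigma theta :: "nat \<Rightarrow> real"
    and beta psi rho tau_max :: real
  assumes f: "proper_fun f" "convex_fun f" "lsc_fun f"
    and g: "proper_fun g" "convex_fun g" "lsc_fun g"
    and K: "linear K"
    and h_convex: "convex_on UNIV h"
    and h_grad: "\<And>u. (h has_derivative (\<lambda>v. gradh u \<bullet> v)) (at u)"
    and h_smooth: "locally_smooth gradh"
    and beta: "beta > 0"
    and psi: "1 < psi" "psi \<le> golden_ratio"
    and rho: "rho = 1 / psi + 1 / psi\<^sup>2"
    and theta0: "theta 0 > 0"
    and tau_max: "tau_max > 0"
    and tau0: "tau 0 > 0"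
    and z0: "z 0 = x 0"
    and z_step: "\<And>n. n \<ge> 1 \<Longrightarrow> z n = ((psi - 1) / psi) *\<^sub>R x (n - 1) + (1 / psi) *\<^sub>R z (n - 1)"
    and x_step: "\<And>n. n \<ge> 1 \<Longrightarrow> is_prox (tau (n - 1)) f
                   (z n - tau (n - 1) *\<^sub>R adjoint K (y (n - 1)) - tau (n - 1) *\<^sub>R gradh (x (n - 1))) (x n)"
    and tau_step: "\<And>n. n \<ge> 1 \<Longrightarrow> tau n =
          (let Lbar = norm (gradh (x n) - gradh (x (n - 1))) / norm (x n - x (n - 1));
               den = 9 * (Lbar\<^sup>2 + beta * psi * (onorm K)\<^sup>2)
           in if x n = x (n - 1) \<or> den = 0 then min (rho * tau (n - 1)) tau_max
              else min (min (rho * tau (n - 1)) (psi * theta (n - 1) / den * (1 / tau (n - 1)))) tau_max)"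
    and sigma_step: "\<And>n. n \<ge> 1 \<Longrightarrow> sigma n = beta * tau n"
    and w_step: "\<And>n. n \<ge> 1 \<Longrightarrow> is_prox (1 / sigma n) g ((1 / sigma n) *\<^sub>R y (n - 1) + K (x n)) (w n)"
    and y_step: "\<And>n. n \<ge> 1 \<Longrightarrow> y n = y (n - 1) + sigma n *\<^sub>R (K (x n) - w n)"
    and theta_step: "\<And>n. n \<ge> 1 \<Longrightarrow> theta n = psi * tau n / tau (n - 1)"
    and x_bounded: "bounded (range x)"
  shows "(\<exists>c>0. \<forall>n. c \<le> tau n) \<and> (\<exists>c>0. \<forall>n. c \<le> theta n)"
proof -
  have psi0: "psi > 0" using psi by simp
  have rho1: "rho \<ge> 1"
  proof -
    have s5: "sqrt 5 ^ 2 = (5::real)" by simp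
    have "psi - 1/2 \<le> sqrt 5 / 2" using psi(2) unfolding golden_ratio_def by simp
    moreover have "0 \<le> psi - 1/2" using psi by simp
    ultimately have "(psi - 1/2)^2 \<le> (sqrt 5 / 2)^2" by (rule power_mono)
    hence "psi^2 \<le> psi + 1" using s5 by (simp add: power2_eq_square algebra_simps power_divide)
    hence "1 \<le> (psi + 1) / psi^2" using psi0 by simp
    also have "(psi + 1) / psi^2 = rho" using psi0 rho by (simp add: field_simps power2_eq_square)
    finally show ?thesis .
  qed
  have cpt: "compact (closure (range x))"
    using x_bounded by (simp add: compact_closure)
  obtain L where L: "L > 0" "\<And>u v. u \<in> closure (range x) \<Longrightarrow> v \<in> closure (range x) \<Longrightarrow>
      norm (gradh u - gradh v) \<le> L * norm (u - v)"
  proof -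
    have "\<exists>L>0. \<forall>u\<in>closure (range x). \<forall>v\<in>closure (range x). norm (gradh u - gradh v) \<le> L * norm (u - v)"
      using h_smooth cpt unfolding locally_smooth_def by (elim allE[where x="closure (range x)"]) (erule mp)
    then show ?thesis using that by auto
  qed
  define D where "D = 9 * (L\<^sup>2 + beta * psi * (onorm K)\<^sup>2)"
  have D0: "D > 0" unfolding D_def using L beta psi0 by (simp add: add_pos_nonneg)
  have Lbar: "norm (gradh (x n) - gradh (x m)) / norm (x n - x m) \<le> L" if "x n \<noteq> x m" for n m
  proof -
    have "norm (gradh (x n) - gradh (x m)) \<le> L * norm (x n - x m)"
      using L(2)[OF closure_subset[THEN subsetD, OF rangeI] closure_subset[THEN subsetD, OF rangeI]] .
    moreover have "norm (x n - x m) > 0" using that by simp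
    ultimately show ?thesis by (simp add: divide_le_eq)
  qed
  have pos: "tau n > 0 \<and> theta n > 0" for n
  proof (induction n)
    case 0 then show ?case using tau0 theta0 by simp
  next
    case (Suc n)
    define Lb where "Lb = norm (gradh (x (Suc n)) - gradh (x n)) / norm (x (Suc n) - x n)"
    define den where "den = 9 * (Lb\<^sup>2 + beta * psi * (onorm K)\<^sup>2)"
    have ts: "tau (Suc n) = (if x (Suc n) = x n \<or> den = 0 then min (rho * tau n) tau_max
              else min (min (rho * tau n) (psi * theta n / den * (1 / tau n))) tau_max)"
      using tau_step[of "Suc n"] unfolding den_def Lb_def by (simp add: Let_def)
    have r: "rho * tau n > 0" using rho1 Suc by simp
    have t: "tau (Suc n) > 0"
    proof (cases "x (Suc n) = x n \<or> den = 0")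
      case True then show ?thesis using ts r tau_max by simp
    next
      case False
      have "den \<ge> 0" unfolding den_def using beta psi0 by simp
      hence "den > 0" using False by simp
      hence "psi * theta n / den * (1 / tau n) > 0" using Suc psi0 by simp
      then show ?thesis using ts r tau_max False by simp
    qed
    moreover have "theta (Suc n) > 0" using theta_step[of "Suc n"] t Suc psi0 by simp
    ultimately show ?case by simp
  qed
  define M where "M = max (tau 0) tau_max"
  have M0: "M > 0" unfolding M_def using tau0 by simp
  have tauM: "tau n \<le> M" for n
  proof (cases n)
    case 0 then show ?thesis unfolding M_def by simp
  next
    case (Suc m)
    have "tau n \<le> tau_max" using tau_step[of n] Suc by (simp add: Let_def)
    then show ?thesis unfolding M_def by simp
  qed
  define c1 where "c1 = psi^2 / (D * M)"
  have c10: "c1 > 0" unfolding c1_def using psi0 D0 M0 by simp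
  have key: "min (tau n) (min c1 tau_max) \<le> tau (Suc n)" if "n \<ge> 1" for n
  proof -
    define Lb where "Lb = norm (gradh (x (Suc n)) - gradh (x n)) / norm (x (Suc n) - x n)"
    define den where "den = 9 * (Lb\<^sup>2 + beta * psi * (onorm K)\<^sup>2)"
    have ts: "tau (Suc n) = (if x (Suc n) = x n \<or> den = 0 then min (rho * tau n) tau_max
              else min (min (rho * tau n) (psi * theta n / den * (1 / tau n))) tau_max)"
      using tau_step[of "Suc n"] unfolding den_def Lb_def by (simp add: Let_def)
    have tn: "tau n > 0" using pos by blast
    have r: "tau n \<le> rho * tau n" using rho1 tn by simp
    show ?thesis
    proof (cases "x (Suc n) = x n \<or> den = 0")
      case True then show ?thesis using ts r by auto
    next
      case False
      have "den \<ge> 0" unfolding den_def using beta psi0 by simp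
      hence den0: "den > 0" using False by simp
      have LbL: "Lb \<le> L" unfolding Lb_def using Lbar False by blast
      have Lb0: "Lb \<ge> 0" unfolding Lb_def by simp
      have "Lb^2 \<le> L^2" using LbL Lb0 by (rule power_mono)
      hence denD: "den \<le> D" unfolding den_def D_def by simp
      have tm: "tau (n - 1) > 0" "tau (n - 1) \<le> M" using pos tauM by auto
      have th: "theta n = psi * tau n / tau (n - 1)" using theta_step that by simp
      have eq: "psi * theta n / den * (1 / tau n) = psi^2 / (den * tau (n - 1))"
        using th tn tm den0 by (simp add: field_simps power2_eq_square)
      have "D * M \<ge> den * tau (n - 1)" using denD tm den0 D0
        by (meson less_eq_real_def mult_mono)
      hence "c1 \<le> psi^2 / (den * tau (n - 1))" unfolding c1_def
        using den0 tm psi0 D0 M0 by (intro divide_left_mono) auto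
      then show ?thesis using ts False eq r by auto
    qed
  qed
  define c where "c = min (tau 1) (min c1 tau_max)"
  have c0: "c > 0" unfolding c_def using pos c10 tau_max by simp
  have low: "c \<le> tau n" if "n \<ge> 1" for n
    using that
  proof (induction n rule: dec_induct)
    case base then show ?case unfolding c_def by simp
  next
    case (step m)
    have "c \<le> min (tau m) (min c1 tau_max)" using step unfolding c_def by (auto simp: min_def)
    also have "\<dots> \<le> tau (Suc m)" using key step by simp
    finally show ?case .
  qed
  define c' where "c' = min (tau 0) c"
  have A: "\<forall>n. c' \<le> tau n"
  proof
    fix n show "c' \<le> tau n" using low[of n] unfolding c'_def by (cases n) auto
  qed
  have c'0: "c' > 0" unfolding c'_def using tau0 c0 by simp
  define e where "e = min (theta 0) (psi * c' / M)"
  have e0: "e > 0" unfolding e_def using theta0 psi0 c'0 M0 by simp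
  have B: "\<forall>n. e \<le> theta n"
  proof
    fix n show "e \<le> theta n"
    proof (cases n)
      case 0 then show ?thesis unfolding e_def by simp
    next
      case (Suc m)
      have th: "theta n = psi * tau n / tau m" using theta_step[of n] Suc by simp
      have tm: "tau m > 0" "tau m \<le> M" using pos tauM by auto
      have "psi * c' / M \<le> psi * tau n / M" using A psi0 M0 by (simp add: divide_right_mono)
      also have "\<dots> \<le> psi * tau n / tau m" using tm psi0 pos[of n]
        by (intro divide_left_mono) auto
      finally show ?thesis unfolding e_def th by simp
    qed
  qed
  have A': "\<exists>c>0. \<forall>n. c \<le> tau n" using A c'0 by auto
  have B': "\<exists>c>0. \<forall>n. c \<le> theta n" using B e0 by auto
  show ?thesis using A' B' by (rule conjI)
qed

end
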